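(* Let $\mathbb{F}$ be a field of characteristic $2$, $V$ a finite-dimensional $\mathbb{F}$-vector space and $b$ a non-degenerate symmetric bilinear form on $V$. Let $x$ be a non-zero vector of $V$ with $b(x,x)=0$, and let $u$ be a $b$-symmetric endomorphism of $V$. The following are equivalent: (i) $u(x)=0$ and $u(\{x\}^\perp) \subset \mathbb{F}x$; (ii) there exist $y \in \{x\}^\perp$ and $\alpha \in \mathbb{F}$ such that $u = \alpha\, x\otimes_b x + x\wedge_b y$. Moreover, if these conditions hold then $u$ is nilpotent and $u^3=0$.
   Context: An endomorphism $u$ of $V$ is $b$-symmetric if $(x,y)\mapsto b(x,u(y))$ is symmetric. $\{x\}^\perp = \{z\in V : b(x,z)=0\}$. For $x,y\in V$, $x\otimes_b x$ is the endomorphism $z\mapsto b(x,z)\,x$, and $x \wedge_b y$ is the endomorphism $z \mapsto b(y,z)\,x - b(x,z)\,y$. *)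

theory Defs
  imports Complex_Main
begin

definition bilinear_form :: "('a::field \<Rightarrow> 'v::ab_group_add \<Rightarrow> 'v) \<Rightarrow> ('v \<Rightarrow> 'v \<Rightarrow> 'a) \<Rightarrow> bool" where
  "bilinear_form scale b \<longleftrightarrow>
     (\<forall>y. Vector_Spaces.linear scale (*) (\<lambda>x. b x y)) \<and>
     (\<forall>x. Vector_Spaces.linear scale (*) (\<lambda>y. b x y))"

definition symmetric_form :: "('v \<Rightarrow> 'v \<Rightarrow> 'a) \<Rightarrow> bool" where
  "symmetric_form b \<longleftrightarrow> (\<forall>x y. b x y = b y x)"

definition nondegenerate_form :: "('v::zero \<Rightarrow> 'v \<Rightarrow> 'a::zero) \<Rightarrow> bool" where
  "nondegenerate_form b \<longleftrightarrow> (\<forall>x. (\<forall>y. b x y = 0) \<longrightarrow> x = 0)"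

definition b_symmetric :: "('v \<Rightarrow> 'v \<Rightarrow> 'a) \<Rightarrow> ('v \<Rightarrow> 'v) \<Rightarrow> bool" where
  "b_symmetric b u \<longleftrightarrow> (\<forall>x y. b x (u y) = b y (u x))"

definition orth :: "('v \<Rightarrow> 'v \<Rightarrow> 'a::zero) \<Rightarrow> 'v \<Rightarrow> 'v set" where
  "orth b x = {z. b x z = 0}"

definition btensor :: "('a \<Rightarrow> 'v \<Rightarrow> 'v) \<Rightarrow> ('v \<Rightarrow> 'v \<Rightarrow> 'a) \<Rightarrow> 'v \<Rightarrow> 'v \<Rightarrow> 'v" where
  "btensor scale b x = (\<lambda>z. scale (b x z) x)"

definition bwedge :: "('a \<Rightarrow> 'v \<Rightarrow> 'v::ab_group_add) \<Rightarrow> ('v \<Rightarrow> 'v \<Rightarrow> 'a) \<Rightarrow> 'v \<Rightarrow> 'v \<Rightarrow> 'v \<Rightarrow> 'v" where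
  "bwedge scale b x y = (\<lambda>z. scale (b y z) x - scale (b x z) y)"

end

theory Submission
  imports Defs
begin

theorem proposition4p5:
  fixes scale :: "'a::field \<Rightarrow> 'v::ab_group_add \<Rightarrow> 'v"
    and b :: "'v \<Rightarrow> 'v \<Rightarrow> 'a"
    and x :: 'v
    and u :: "'v \<Rightarrow> 'v"
  assumes vs: "vector_space scale"
    and findim: "\<exists>B. finite_dimensional_vector_space scale B"
    and char2: "CHAR('a) = 2"
    and bil: "bilinear_form scale b"
    and sym: "symmetric_form b"
    and nondeg: "nondegenerate_form b"
    and x_nz: "x \<noteq> 0"
    and x_iso: "b x x = 0"
    and u_lin: "Vector_Spaces.linear scale scale u"
    and u_sym: "b_symmetric b u"
  shows "((u x = 0 \<and> u ` orth b x \<subseteq> range (\<lambda>c. scale c x)) \<longleftrightarrow>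
           (\<exists>y \<in> orth b x. \<exists>\<alpha>. u = (\<lambda>z. scale \<alpha> (btensor scale b x z) + bwedge scale b x y z)))
     \<and> ((u x = 0 \<and> u ` orth b x \<subseteq> range (\<lambda>c. scale c x)) \<longrightarrow>
           (\<exists>k. u ^^ k = (\<lambda>_. 0)) \<and> u ^^ 3 = (\<lambda>_. 0))"
proof -
  interpret V: vector_space scale by (rule vs)
  have symb: "\<And>p q. b p q = b q p" using sym unfolding symmetric_form_def by blast
  have usym: "\<And>p q. b p (u q) = b q (u p)" using u_sym unfolding b_symmetric_def by blast
  have ladd: "\<And>p q r. b (p + q) r = b p r + b q r" and lsc: "\<And>c p r. b (scale c p) r = c * b p r"
    and radd: "\<And>p q r. b r (p + q) = b r p + b r q" and rsc: "\<And>c p r. b r (scale c p) = c * b r p"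
    using bil unfolding bilinear_form_def Vector_Spaces.linear_iff by auto
  have uadd: "\<And>p q. u (p + q) = u p + u q" and usc: "\<And>c p. u (scale c p) = scale c (u p)"
    using u_lin unfolding Vector_Spaces.linear_iff by auto
  have r0: "b r 0 = 0" for r using rsc[where c=0 and p=0 and r=r] by simp
  have u0: "u 0 = 0" using usc[of 0 0] by simp
  have rdiff: "\<And>p q r. b r (p - q) = b r p - b r q"
    by (metis add_diff_cancel eq_diff_eq radd)
  have udiff: "\<And>p q. u (p - q) = u p - u q"
    by (metis add_diff_cancel eq_diff_eq uadd)
  have two: "(1::'a) + 1 = 0"
    using of_nat_CHAR[where 'a='a] char2 by simp
  have neg: "\<And>v::'v. - v = v"
  proof -
    fix v :: 'v
    have "v + v = scale (1 + 1) v" by (simp only: V.scale_left_distrib V.scale_one)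
    also have "\<dots> = 0" using two by simp
    finally show "- v = v" by (simp add: add_eq_0_iff)
  qed
  define P where "P = (u x = 0 \<and> u ` orth b x \<subseteq> range (\<lambda>c. scale c x))"
  have i2 : "\<exists>y \<in> orth b x. \<exists>\<alpha>. u = (\<lambda>z. scale \<alpha> (btensor scale b x z) + bwedge scale b x y z)"
    if P: P
  proof -
    have ux: "u x = 0" and uo: "u ` orth b x \<subseteq> range (\<lambda>c. scale c x)" using P P_def by auto
    obtain w0 where w0: "b x w0 \<noteq> 0" using nondeg x_nz unfolding nondegenerate_form_def by blast
    define w where "w = scale (inverse (b x w0)) w0"
    have bw: "b x w = 1" unfolding w_def rsc using w0 by simp
    have yo: "u w \<in> orth b x" unfolding orth_def using usym[of x w] ux r0 by simp
    define \<beta> where "\<beta> = b (u w) w"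
    have "u = (\<lambda>z. scale (- \<beta>) (btensor scale b x z) + bwedge scale b x (u w) z)"
    proof
      fix z
      define c where "c = b x z"
      define z' where "z' = z - scale c w"
      have "b x z' = 0" unfolding z'_def rdiff rsc bw c_def by simp
      then have "u z' \<in> range (\<lambda>c. scale c x)" using uo unfolding orth_def by blast
      then obtain k where k: "u z' = scale k x" by blast
      have zz: "z = z' + scale c w" unfolding z'_def by simp
      have uz: "u z = scale k x + scale c (u w)" by (subst zz) (simp add: uadd usc k)
      have bk: "b (u w) z' = k"
        using usym[of z' w] k symb[of "u w" z'] rsc[where c=k and p=x and r=w] symb[of w x] bw by simp
      have bz: "b (u w) z = k + c * \<beta>"
        by (subst zz) (simp add: radd rsc bk \<beta>_def)
      have sc: "- \<beta> * c + (k + c * \<beta>) = k" by (simp add: algebra_simps)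
      have e1: "scale (- \<beta>) (scale c x) + scale (k + c * \<beta>) x = scale k x"
        using V.scale_left_distrib[of "- \<beta> * c" "k + c * \<beta>" x] sc by simp
      have e2: "- scale c (u w) = scale c (u w)" by (rule neg)
      have "scale (- \<beta>) (btensor scale b x z) + bwedge scale b x (u w) z
          = (scale (- \<beta>) (scale c x) + scale (k + c * \<beta>) x) + - scale c (u w)"
        unfolding btensor_def bwedge_def bz c_def by (simp add: add.assoc)
      also have "\<dots> = scale k x + scale c (u w)" by (simp only: e1 e2)
      finally show "u z = scale (- \<beta>) (btensor scale b x z) + bwedge scale b x (u w) z"
        using uz by simp
    qed
    then show ?thesis using yo by blast
  qed
  have ii1: P if ex: "\<exists>y \<in> orth b x. \<exists>\<alpha>. u = (\<lambda>z. scale \<alpha> (btensor scale b x z) + bwedge scale b x y z)"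
  proof -
    from ex obtain y where y: "y \<in> orth b x" and ex2: "\<exists>\<alpha>. u = (\<lambda>z. scale \<alpha> (btensor scale b x z) + bwedge scale b x y z)"
      by (rule bexE)
    from ex2 obtain \<alpha> where ueq: "u = (\<lambda>z. scale \<alpha> (btensor scale b x z) + bwedge scale b x y z)"
      by (rule exE)
    have bxy: "b y x = 0" using y symb[of y x] unfolding orth_def by simp
    have "u x = 0" unfolding ueq btensor_def bwedge_def using x_iso bxy by simp
    moreover have "u ` orth b x \<subseteq> range (\<lambda>c. scale c x)"
    proof
      fix v assume "v \<in> u ` orth b x"
      then obtain z where z: "b x z = 0" and v: "v = u z" unfolding orth_def by blast
      have "v = scale (b y z) x" unfolding v ueq btensor_def bwedge_def using z by simp
      then show "v \<in> range (\<lambda>c. scale c x)" by blast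
    qed
    ultimately show P unfolding P_def by blast
  qed
  have nil: "u ^^ 3 = (\<lambda>_. 0)" if P: P
  proof
    fix z
    have ux: "u x = 0" and uo: "u ` orth b x \<subseteq> range (\<lambda>c. scale c x)" using P P_def by auto
    have "u z \<in> orth b x" unfolding orth_def using usym[of x z] ux r0 by simp
    then obtain k where k: "u (u z) = scale k x" using uo by blast
    have "u (u (u z)) = 0" using k usc ux by simp
    then show "(u ^^ 3) z = 0" by (simp add: numeral_3_eq_3)
  qed
  show ?thesis using i2 ii1 nil unfolding P_def by blast
qed

end
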